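(* Assume $\alpha\le\beta+1$ and set $\lambda=\lfloor(\beta+1)/\alpha\rfloor$. Let $\mathcal{S}_0\subseteq\mathcal{S}$ be nonempty with maximum $\overline{s}$ and minimum $\underline{s}$, let $l=\lfloor(\beta+\underline{s}-\overline{s})/\alpha\rfloor$, and let $n\ge l$. Then there exists a set $\mathcal{V}^n(\mathcal{S}_0)\subseteq\mathbb{Z}^n$ of request sequences such that $$\log_2\big|\mathcal{V}^n(\mathcal{S}_0)\big|\le \left\lceil \frac{n-l}{\lambda}\right\rceil,$$ and such that for every input pair $(s_0,\mathbf{x})\in\mathcal{S}_0\times\mathcal{X}^n$ we have $\mathcal{Y}^n(s_0,\mathbf{x})\cap\mathcal{V}^n(\mathcal{S}_0)\neq\emptyset$ (feasible sets taken with output alphabet $\mathbb{Z}$).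
   Context: Fix integers $\alpha\ge 1$ (maximal consumption per step) and $\beta\ge 0$ (battery capacity). Let $\mathcal{X}=\{0,1,\dots,\alpha\}$ and $\mathcal{S}=\{0,1,\dots,\beta\}$. For an initial battery state $s_0\in\mathcal{S}$, a consumption sequence $\mathbf{x}=(x_0,\dots,x_{n-1})\in\mathcal{X}^n$ and a request sequence $\mathbf{y}=(y_0,\dots,y_{n-1})\in\mathbb{Z}^n$, the battery states are $s_i=s_0+\sum_{k=0}^{i-1}y_k-\sum_{k=0}^{i-1}x_k$ for $i=0,1,\dots,n$. For an output alphabet $\mathcal{Y}\subseteq\mathbb{Z}$, the set of feasible requests is $\mathcal{Y}^n(s_0,\mathbf{x})=\{\mathbf{y}\in\mathcal{Y}^n: s_i\in\{0,\dots,\beta\}\text{ for all } i=0,\dots,n\}$. *)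

theory Defs
  imports Complex_Main
begin

definition battery_state :: "nat \<Rightarrow> nat list \<Rightarrow> int list \<Rightarrow> nat \<Rightarrow> int" where
  "battery_state s0 x y i = int s0 + sum_list (take i y) - sum_list (take i (map int x))"

definition feasible_requests :: "nat \<Rightarrow> int set \<Rightarrow> nat \<Rightarrow> nat \<Rightarrow> nat list \<Rightarrow> int list set" where
  "feasible_requests beta Y n s0 x =
     {y. length y = n \<and> set y \<subseteq> Y \<and>
         (\<forall>i\<le>n. 0 \<le> battery_state s0 x y i \<and> battery_state s0 x y i \<le> int beta)}"

end

theory Submission
  imports Defs
begin

definition blk :: "nat \<Rightarrow> nat \<Rightarrow> bool list \<Rightarrow> nat \<Rightarrow> int list" where
  "blk a lam bs r = map (\<lambda>i. if bs ! (i div lam) then int a else 0) [0..<r]"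

definition PP :: "nat \<Rightarrow> int \<Rightarrow> int list \<Rightarrow> int list \<Rightarrow> bool" where
  "PP b s xs ys \<longleftrightarrow> length ys = length xs \<and>
     (\<forall>i\<le>length xs. 0 \<le> s + sum_list (take i ys) - sum_list (take i xs) \<and>
                     s + sum_list (take i ys) - sum_list (take i xs) \<le> int b)"

lemma PP_append:
  assumes "PP b s xs1 ys1" "PP b (s + sum_list ys1 - sum_list xs1) xs2 ys2"
  shows "PP b s (xs1 @ xs2) (ys1 @ ys2)"
  unfolding PP_def
proof (intro conjI allI impI)
  show "length (ys1 @ ys2) = length (xs1 @ xs2)" using assms by (simp add: PP_def)
next
  fix i assume i: "i \<le> length (xs1 @ xs2)"
  have l1: "length ys1 = length xs1" using assms(1) by (simp add: PP_def)
  have "0 \<le> s + sum_list (take i (ys1 @ ys2)) - sum_list (take i (xs1 @ xs2)) \<and>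
        s + sum_list (take i (ys1 @ ys2)) - sum_list (take i (xs1 @ xs2)) \<le> int b"
  proof (cases "i \<le> length xs1")
    case True
    then show ?thesis using assms(1) l1 by (simp add: PP_def)
  next
    case False
    then have "i - length xs1 \<le> length xs2" using i by simp
    then have "0 \<le> (s + sum_list ys1 - sum_list xs1) + sum_list (take (i - length xs1) ys2) - sum_list (take (i - length xs1) xs2) \<and>
      (s + sum_list ys1 - sum_list xs1) + sum_list (take (i - length xs1) ys2) - sum_list (take (i - length xs1) xs2) \<le> int b"
      using assms(2) unfolding PP_def by blast
    then show ?thesis using l1 False by simp
  qed
  then show "0 \<le> s + sum_list (take i (ys1 @ ys2)) - sum_list (take i (xs1 @ xs2))"
    "s + sum_list (take i (ys1 @ ys2)) - sum_list (take i (xs1 @ xs2)) \<le> int b" by auto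
qed

lemma sum_bnd:
  assumes "\<forall>x\<in>set xs. 0 \<le> x \<and> x \<le> (a::int)"
  shows "0 \<le> sum_list xs \<and> sum_list xs \<le> a * int (length xs)"
  using assms by (induction xs) (auto simp: algebra_simps)

lemma block:
  assumes "0 \<le> s" "s \<le> int b" "\<forall>x\<in>set xs. 0 \<le> x \<and> x \<le> int a"
    "int a * int (length xs) \<le> int b + 1"
  shows "\<exists>c. PP b s xs (replicate (length xs) (if c then int a else 0))"
proof (cases "sum_list xs \<le> s")
  case True
  show ?thesis
  proof (rule exI[of _ False], unfold PP_def, intro conjI allI impI)
    fix i assume i: "i \<le> length xs"
    have t: "0 \<le> sum_list (take i xs)" using sum_bnd[of "take i xs"] assms(3)
      by (meson in_set_takeD)
    have d: "0 \<le> sum_list (drop i xs)" using sum_bnd[of "drop i xs"] assms(3)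
      by (meson in_set_dropD)
    have "sum_list xs = sum_list (take i xs) + sum_list (drop i xs)"
      by (metis append_take_drop_id sum_list_append)
    then show "0 \<le> s + sum_list (take i (replicate (length xs) (if False then int a else 0))) - sum_list (take i xs)"
      "s + sum_list (take i (replicate (length xs) (if False then int a else 0))) - sum_list (take i xs) \<le> int b"
      using True t d assms by (auto simp: sum_list_replicate)
  qed simp
next
  case False
  show ?thesis
  proof (rule exI[of _ True], unfold PP_def, intro conjI allI impI)
    fix i assume i: "i \<le> length xs"
    have t: "sum_list (take i xs) \<le> int a * int i" using sum_bnd[of "take i xs" "int a"] assms(3) i
      by (metis in_set_takeD length_take min.absorb2)
    have d: "sum_list (drop i xs) \<le> int a * int (length xs - i)"
      using sum_bnd[of "drop i xs" "int a"] assms(3) by (metis in_set_dropD length_drop)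
    have e: "sum_list xs = sum_list (take i xs) + sum_list (drop i xs)"
      by (metis append_take_drop_id sum_list_append)
    have r: "sum_list (take i (replicate (length xs) (int a))) = int a * int i"
      using i by (simp add: min_def sum_list_replicate)
    have q: "int a * int (length xs - i) = int a * int (length xs) - int a * int i"
      using i by (simp add: of_nat_diff right_diff_distrib)
    show "0 \<le> s + sum_list (take i (replicate (length xs) (if True then int a else 0))) - sum_list (take i xs)"
      using r t assms by simp
    show "s + sum_list (take i (replicate (length xs) (if True then int a else 0))) - sum_list (take i xs) \<le> int b"
      using r d e q False assms by simp
  qed simp
qed

lemma chunks:
  assumes lam: "0 < lam" "int a * int lam \<le> int b + 1"
  shows "\<forall>x\<in>set xs. 0 \<le> x \<and> x \<le> int a \<Longrightarrow> 0 \<le> s \<Longrightarrow> s \<le> int b \<Longrightarrow>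
    \<exists>bs. length bs = (length xs + lam - 1) div lam \<and> PP b s xs (blk a lam bs (length xs))"
proof (induction "length xs" arbitrary: xs s rule: less_induct)
  case less
  show ?case
  proof (cases "length xs \<le> lam")
    case True
    show ?thesis
    proof (cases "xs = []")
      case True
      have "(lam - 1) div lam = 0" using lam by simp
      then show ?thesis using True by (auto simp: PP_def blk_def less.prems)
    next
      case False
      have "int a * int (length xs) \<le> int a * int lam" using True
        by (simp add: mult_left_mono)
      then obtain c where c: "PP b s xs (replicate (length xs) (if c then int a else 0))"
        using block[of s b xs a] less.prems lam by force
      have "blk a lam [c] (length xs) = replicate (length xs) (if c then int a else 0)"
        by (rule nth_equalityI) (use True in \<open>auto simp: blk_def\<close>)
      moreover have "(length xs + lam - 1) div lam = 1"
      proof -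
        obtain k where k: "length xs = Suc k" using False by (cases xs) auto
        have "k div lam = 0" using True k by simp
        then show ?thesis using k lam by simp
      qed
      ultimately show ?thesis using c by (intro exI[of _ "[c]"]) auto
    qed
  next
    case False
    define xs1 where "xs1 = take lam xs"
    define xs2 where "xs2 = drop lam xs"
    have len1: "length xs1 = lam" using False by (simp add: xs1_def)
    have s1: "\<forall>x\<in>set xs1. 0 \<le> x \<and> x \<le> int a" using less.prems by (auto simp: xs1_def dest: in_set_takeD)
    have s2: "\<forall>x\<in>set xs2. 0 \<le> x \<and> x \<le> int a" using less.prems by (auto simp: xs2_def dest: in_set_dropD)
    obtain c where c: "PP b s xs1 (replicate lam (if c then int a else 0))"
      using block[of s b xs1 a] less.prems lam len1 s1 by force
    define s' where "s' = s + sum_list (replicate lam (if c then int a else 0)) - sum_list xs1"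
    have "0 \<le> s' \<and> s' \<le> int b" using c len1 unfolding PP_def s'_def
      by (metis order.refl length_replicate take_all)
    moreover have "length xs2 < length xs" using False lam by (simp add: xs2_def)
    ultimately obtain bs where bs: "length bs = (length xs2 + lam - 1) div lam"
      "PP b s' xs2 (blk a lam bs (length xs2))" using less.hyps s2 by blast
    have app: "PP b s (xs1 @ xs2) (replicate lam (if c then int a else 0) @ blk a lam bs (length xs2))"
      using PP_append[OF c] bs(2) s'_def by simp
    have eq: "blk a lam (c # bs) (length xs) = replicate lam (if c then int a else 0) @ blk a lam bs (length xs2)"
    proof (rule nth_equalityI)
      show "length (blk a lam (c # bs) (length xs)) =
        length (replicate lam (if c then int a else 0) @ blk a lam bs (length xs2))"
        using False by (simp add: blk_def xs2_def)
    next
      fix i assume "i < length (blk a lam (c # bs) (length xs))"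
      then have i: "i < length xs" by (simp add: blk_def)
      show "blk a lam (c # bs) (length xs) ! i =
        (replicate lam (if c then int a else 0) @ blk a lam bs (length xs2)) ! i"
      proof (cases "i < lam")
        case True
        then show ?thesis using i by (simp add: blk_def nth_append)
      next
        case False
        then have "i div lam = Suc ((i - lam) div lam)" using lam by (simp add: le_div_geq)
        then show ?thesis using i False by (simp add: blk_def nth_append xs2_def)
      qed
    qed
    have "length (c # bs) = (length xs + lam - 1) div lam"
    proof -
      have "length xs + lam - 1 = (length xs2 + lam - 1) + lam" using False by (simp add: xs2_def)
      moreover have "lam \<le> length xs + lam - 1" using False by simp
      ultimately have "(length xs + lam - 1) div lam = Suc ((length xs2 + lam - 1) div lam)"
        using le_div_geq[OF lam(1), of "length xs + lam - 1"] by simp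
      then show ?thesis using bs(1) by simp
    qed
    moreover have "xs1 @ xs2 = xs" by (simp add: xs1_def xs2_def)
    ultimately show ?thesis using app eq by (intro exI[of _ "c # bs"]) auto
  qed
qed

lemma pre_ok:
  fixes xs :: "int list"
  assumes "\<forall>x\<in>set xs. 0 \<le> x \<and> x \<le> int a" "l \<le> length xs"
    "int a * int l \<le> int b + int mn - int mx" "int mn \<le> s" "s \<le> int mx" "mx \<le> b" "0 \<le> s"
  shows "PP b s (take l xs) (if l = 0 then [] else int (b - mx) # replicate (l - 1) 0)"
  unfolding PP_def
proof (intro conjI allI impI)
  show "length (if l = 0 then [] else int (b - mx) # replicate (l - 1) 0) = length (take l xs)"
    using assms(2) by auto
next
  fix i assume i: "i \<le> length (take l xs)"
  then have il: "i \<le> l" by simp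
  have tk: "take i (take l xs) = take i xs" using il by (simp add: min_def)
  have sb: "0 \<le> sum_list (take i xs) \<and> sum_list (take i xs) \<le> int a * int i"
    using sum_bnd[of "take i xs" "int a"] assms(1,2) il
    by (metis in_set_takeD length_take min.absorb2 order.trans)
  have ai: "int a * int i \<le> int a * int l" using il by (simp add: mult_left_mono)
  have "0 \<le> s + sum_list (take i (if l = 0 then [] else int (b - mx) # replicate (l - 1) 0)) - sum_list (take i xs) \<and>
        s + sum_list (take i (if l = 0 then [] else int (b - mx) # replicate (l - 1) 0)) - sum_list (take i xs) \<le> int b"
  proof (cases "i = 0")
    case True
    then show ?thesis using assms by simp
  next
    case False
    then have "l \<noteq> 0" using il by simp
    then have "sum_list (take i (if l = 0 then [] else int (b - mx) # replicate (l - 1) 0)) = int b - int mx"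
      using False assms(6) by (cases i) (auto simp: sum_list_replicate)
    then show ?thesis using sb ai assms by simp
  qed
  then show "0 \<le> s + sum_list (take i (if l = 0 then [] else int (b - mx) # replicate (l - 1) 0)) - sum_list (take i (take l xs))"
    "s + sum_list (take i (if l = 0 then [] else int (b - mx) # replicate (l - 1) 0)) - sum_list (take i (take l xs)) \<le> int b"
    using tk by auto
qed

theorem theorem1:
  fixes \<alpha> \<beta> n :: nat and S0 :: "nat set"
  assumes "1 \<le> \<alpha>" and "\<alpha> \<le> \<beta> + 1"
    and "S0 \<subseteq> {0..\<beta>}" and "S0 \<noteq> {}"
    and "n \<ge> (\<beta> + Min S0 - Max S0) div \<alpha>"
  shows "\<exists>V :: int list set.
           (\<forall>y\<in>V. length y = n) \<and> finite V \<and>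
           log 2 (real (card V))
             \<le> real_of_int \<lceil>(real n - real ((\<beta> + Min S0 - Max S0) div \<alpha>))
                              / real ((\<beta> + 1) div \<alpha>)\<rceil> \<and>
           (\<forall>s0\<in>S0. \<forall>x. length x = n \<and> set x \<subseteq> {0..\<alpha>} \<longrightarrow>
              feasible_requests \<beta> UNIV n s0 x \<inter> V \<noteq> {})"
proof -
  define mx where "mx = Max S0"
  define mn where "mn = Min S0"
  define l where "l = (\<beta> + mn - mx) div \<alpha>"
  define lam where "lam = (\<beta> + 1) div \<alpha>"
  have fin: "finite S0" using assms(3) finite_subset by blast
  have mxS: "mx \<in> S0" using fin assms(4) by (simp add: mx_def)
  have mnS: "mn \<in> S0" using fin assms(4) by (simp add: mn_def)
  have mxb: "mx \<le> \<beta>" using mxS assms(3) by auto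
  have mnmx: "mn \<le> mx" using fin assms(4) by (simp add: mn_def mx_def)
  have lam0: "0 < lam" using assms(1,2) le_div_geq[of \<alpha> "\<beta> + 1"] by (simp add: lam_def)
  have lamb: "int \<alpha> * int lam \<le> int \<beta> + 1"
  proof -
    have "\<alpha> * lam \<le> \<beta> + 1" unfolding lam_def by (rule times_div_less_eq_dividend)
    then show ?thesis by (metis of_nat_Suc of_nat_le_iff of_nat_mult add.commute Suc_eq_plus1)
  qed
  have al: "int \<alpha> * int l \<le> int \<beta> + int mn - int mx"
  proof -
    have "\<alpha> * l \<le> \<beta> + mn - mx" unfolding l_def by (rule times_div_less_eq_dividend)
    then have "int (\<alpha> * l) \<le> int (\<beta> + mn - mx)" by (simp only: of_nat_le_iff)
    then show ?thesis using mxb by (simp add: of_nat_diff of_nat_mult)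
  qed
  have ln: "l \<le> n" using assms(5) by (simp add: l_def mn_def mx_def)
  define pre :: "int list" where "pre = (if l = 0 then [] else int (\<beta> - mx) # replicate (l - 1) 0)"
  define M where "M = (n - l + lam - 1) div lam"
  define V where "V = (\<lambda>bs. pre @ blk \<alpha> lam bs (n - l)) ` {bs. length bs = M}"
  have lenV: "\<forall>y\<in>V. length y = n" using ln by (auto simp: V_def pre_def blk_def)
  have BS: "{bs::bool list. length bs = M} = {bs. set bs \<subseteq> UNIV \<and> length bs = M}" by simp
  have finB: "finite {bs::bool list. length bs = M}" unfolding BS by (rule finite_lists_length_eq) simp
  have cardB: "card {bs::bool list. length bs = M} = 2 ^ M"
    using card_lists_length_eq[of "UNIV::bool set" M] by simp
  have finV: "finite V" using finB by (simp add: V_def)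
  have cV: "card V \<le> 2 ^ M" using card_image_le[OF finB] cardB by (simp add: V_def)
  have neV: "V \<noteq> {}" unfolding V_def by (auto intro: exI[of _ "replicate M False"])
  then have cV0: "0 < card V" using finV by (simp add: card_gt_0_iff)
  have r1: "real (card V) \<le> 2 ^ M" using cV
    by (metis of_nat_le_iff of_nat_numeral of_nat_power)
  have r2: "0 < real (card V)" using cV0 by simp
  have "log 2 (real (card V)) \<le> log 2 (2 ^ M)"
    by (rule log_le_cancel_iff[THEN iffD2]) (use r1 r2 in auto)
  also have "\<dots> = real M" by (simp add: log_nat_power)
  also have "\<dots> \<le> real_of_int \<lceil>(real n - real l) / real lam\<rceil>"
  proof -
    have "M * lam \<le> n - l + lam - 1" unfolding M_def by (rule div_times_less_eq_dividend)
    then have "M * lam + 1 \<le> (n - l) + lam" using lam0 by linarith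
    then have "real (M * lam + 1) \<le> real ((n - l) + lam)" by (simp only: of_nat_le_iff)
    then have "real M * real lam \<le> real (n - l) + real lam - 1" by simp
    then have "(real M - 1) * real lam < real n - real l" using ln lam0 by (simp add: algebra_simps of_nat_diff)
    then have "real M - 1 < (real n - real l) / real lam" using lam0 by (simp add: field_simps)
    then have "int M \<le> \<lceil>(real n - real l) / real lam\<rceil>" by (simp add: le_ceiling_iff)
    then show ?thesis by linarith
  qed
  finally have logb: "log 2 (real (card V)) \<le> real_of_int \<lceil>(real n - real l) / real lam\<rceil>" .
  have feas: "feasible_requests \<beta> UNIV n s0 x \<inter> V \<noteq> {}"
    if s0: "s0 \<in> S0" and x: "length x = n" "set x \<subseteq> {0..\<alpha>}" for s0 x
  proof -
    define xs where "xs = map int x"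
    have xsb: "\<forall>y\<in>set xs. 0 \<le> y \<and> y \<le> int \<alpha>" using x by (auto simp: xs_def)
    have s0b: "mn \<le> s0" "s0 \<le> mx" using s0 fin by (auto simp: mn_def mx_def)
    have P1: "PP \<beta> (int s0) (take l xs) pre"
      unfolding pre_def using pre_ok[OF xsb _ al] ln x s0b mxb by (simp add: xs_def)
    define s' where "s' = int s0 + sum_list pre - sum_list (take l xs)"
    have lpre: "length pre = l" by (simp add: pre_def)
    have ltk: "length (take l xs) = l" using ln x by (simp add: xs_def)
    have s'b: "0 \<le> s' \<and> s' \<le> int \<beta>" using P1 ltk lpre unfolding PP_def s'_def
      by (metis order.refl take_all)
    have xsb2: "\<forall>y\<in>set (drop l xs). 0 \<le> y \<and> y \<le> int \<alpha>" using xsb by (auto dest: in_set_dropD)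
    obtain bs where bs: "length bs = (length (drop l xs) + lam - 1) div lam"
      "PP \<beta> s' (drop l xs) (blk \<alpha> lam bs (length (drop l xs)))"
      using chunks[OF lam0 lamb xsb2] s'b by blast
    have ld: "length (drop l xs) = n - l" using x by (simp add: xs_def)
    have P2: "PP \<beta> s' (drop l xs) (blk \<alpha> lam bs (n - l))" using bs(2) ld by simp
    have PP: "PP \<beta> (int s0) xs (pre @ blk \<alpha> lam bs (n - l))"
      using PP_append[OF P1 P2[unfolded s'_def]] by simp
    have yV: "pre @ blk \<alpha> lam bs (n - l) \<in> V" using bs(1) ld by (auto simp: V_def M_def)
    have "pre @ blk \<alpha> lam bs (n - l) \<in> feasible_requests \<beta> UNIV n s0 x"
      using PP x unfolding feasible_requests_def PP_def battery_state_def xs_def by auto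
    then show ?thesis using yV by blast
  qed
  show ?thesis
    using lenV finV logb feas by (intro exI[of _ V]) (auto simp: l_def lam_def mn_def mx_def)
qed

end
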